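(* Let $\epsilon>0$, let $\mathbf{w}\in\mathbb{R}^d$ be non-increasing, and let $1\le k\le d-1$ with $\mathbf{w}^k_{max}>\mathbf{w}^k_{min}$. The additive mechanism with parameters $(\epsilon,\mathbf{w},k)$ satisfies $\epsilon$-local differential privacy: for all scored votes $v,v'\in\mathbb{D}_v$ and every $S\in\mathcal{C}^k$, $\Pr[S\mid v]\le e^\epsilon\Pr[S\mid v']$.
   Context: Candidates are $C_1,\dots,C_d$; a vote is a linear ordering; with non-increasing score vector $\mathbf{w}$ the scored vote $v$ assigns score $w_j$ to the candidate at rank $j$; $\mathbb{D}_v$ is the set of permutations of $\mathbf{w}$. Let $\mathcal{C}^k$ be the set of $k$-element subsets of $\{C_1,\dots,C_d\}$, $\mathbf{w}^k_{max}=\sum_{j=1}^kw_j$, $\mathbf{w}^k_{min}=\sum_{j=d-k+1}^dw_j$, $W=\sum_{j=1}^dw_j$. The additive mechanism on input $v$ outputs $S\in\mathcal{C}^k$ with probability $$\Pr[S\mid v]=\frac{\sum_{C_{j'}\in S}v_{j'}-\mathbf{w}^k_{min}}{\mathbf{w}^k_{max}-\mathbf{w}^k_{min}}\cdot\frac{e^\epsilon-1}{\Phi}+\frac1\Phi,\qquad \Phi=\binom dk\frac{\frac kd(e^\epsilon-1)W-e^\epsilon\mathbf{w}^k_{min}+\mathbf{w}^k_{max}}{\mathbf{w}^k_{max}-\mathbf{w}^k_{min}},$$ and releases the private view $\tilde v_j=a_k\cdot[C_j\in S]-b_k$ ($j=1,\dots,d$) for constants $a_k,b_k$ depending only on $\epsilon,\mathbf{w},k,d$.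 *)

theory Defs
  imports Complex_Main "HOL-Combinatorics.Permutations"
begin

text \<open>A score vector is w :: nat => real with
  w j the score of rank j (1 <= j <= d). A scored vote v assigns v j to candidate C_j;
  the set D_v of scored votes is the set of permutations of w.\<close>

definition scored_votes :: "nat \<Rightarrow> (nat \<Rightarrow> real) \<Rightarrow> (nat \<Rightarrow> real) set" where
  "scored_votes d w = {v. \<exists>\<sigma>. \<sigma> permutes {1..d} \<and> (\<forall>j\<in>{1..d}. v j = w (\<sigma> j))}"

definition k_subsets :: "nat \<Rightarrow> nat \<Rightarrow> nat set set" where
  "k_subsets d k = {S. S \<subseteq> {1..d} \<and> card S = k}"

definition wmax :: "nat \<Rightarrow> (nat \<Rightarrow> real) \<Rightarrow> real" where
  "wmax k w = (\<Sum>j=1..k. w j)"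

definition wmin :: "nat \<Rightarrow> nat \<Rightarrow> (nat \<Rightarrow> real) \<Rightarrow> real" where
  "wmin d k w = (\<Sum>j=d-k+1..d. w j)"

definition Wtot :: "nat \<Rightarrow> (nat \<Rightarrow> real) \<Rightarrow> real" where
  "Wtot d w = (\<Sum>j=1..d. w j)"

definition Phi :: "real \<Rightarrow> nat \<Rightarrow> nat \<Rightarrow> (nat \<Rightarrow> real) \<Rightarrow> real" where
  "Phi \<epsilon> d k w = real (d choose k) *
     ((real k / real d) * (exp \<epsilon> - 1) * Wtot d w - exp \<epsilon> * wmin d k w + wmax k w)
     / (wmax k w - wmin d k w)"

definition additive_prob :: "real \<Rightarrow> nat \<Rightarrow> nat \<Rightarrow> (nat \<Rightarrow> real) \<Rightarrow> (nat \<Rightarrow> real) \<Rightarrow> nat set \<Rightarrow> real" where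
  "additive_prob \<epsilon> d k w v S =
     ((\<Sum>j\<in>S. v j) - wmin d k w) / (wmax k w - wmin d k w) * (exp \<epsilon> - 1) / Phi \<epsilon> d k w
     + 1 / Phi \<epsilon> d k w"

end

theory Submission
  imports Defs
begin

lemma swap_le:
  fixes f :: "nat \<Rightarrow> real"
  assumes "finite A" "finite B" "card A = card B" "\<forall>a\<in>A. \<forall>b\<in>B. f a \<le> f b"
  shows "sum f A \<le> sum f B"
proof (cases "A = {}")
  case True then show ?thesis using assms by auto
next
  case False
  define c where "c = Max (f ` A)"
  have "\<forall>a\<in>A. f a \<le> c" using assms(1) c_def by auto
  then have "sum f A \<le> of_nat (card A) * c" using sum_bounded_above[of A f c] by simp
  moreover have "\<forall>b\<in>B. c \<le> f b"
    using assms False c_def by (simp add: Max_le_iff)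
  then have "of_nat (card B) * c \<le> sum f B" using sum_bounded_below[of B c f] by simp
  ultimately show ?thesis using assms(3) by simp
qed

lemma exch:
  fixes f :: "nat \<Rightarrow> real"
  assumes "finite T" "finite U" "card T = card U" "\<forall>a\<in>T-U. \<forall>b\<in>U-T. f a \<le> f b"
  shows "sum f T \<le> sum f U"
proof -
  have cT: "card (T - U) = card T - card (T \<inter> U)"
    using assms by (metis card_Diff_subset_Int finite_Int)
  have cU: "card (U - T) = card U - card (T \<inter> U)"
    using assms by (metis card_Diff_subset_Int finite_Int Int_commute)
  have "sum f (T - U) \<le> sum f (U - T)"
    using swap_le[of "T-U" "U-T" f] assms cT cU by auto
  moreover have "sum f T = sum f (T \<inter> U) + sum f (T - U)"
    using assms(1) sum.Int_Diff by blast
  moreover have "sum f U = sum f (T \<inter> U) + sum f (U - T)"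
    using assms(2) sum.Int_Diff[of U f T] by (simp add: Int_commute)
  ultimately show ?thesis by simp
qed

lemma bounds:
  fixes w :: "nat \<Rightarrow> real"
  assumes mono: "\<And>i j. 1 \<le> i \<Longrightarrow> i \<le> j \<Longrightarrow> j \<le> d \<Longrightarrow> w j \<le> w i"
    and T: "T \<subseteq> {1..d}" "card T = k" and kd: "k \<le> d"
  shows "wmin d k w \<le> sum w T \<and> sum w T \<le> wmax k w"
proof
  have fT: "finite T" using T finite_subset by blast
  show "sum w T \<le> wmax k w" unfolding wmax_def
  proof (rule exch)
    show "finite T" by fact
    show "finite {1..k}" by simp
    show "card T = card {1..k}" using T by simp
    show "\<forall>a\<in>T - {1..k}. \<forall>b\<in>{1..k} - T. w a \<le> w b"
      using T kd by (auto intro!: mono)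
  qed
  show "wmin d k w \<le> sum w T" unfolding wmin_def
  proof (rule exch)
    show "finite T" by fact
    show "finite {d-k+1..d}" by simp
    show "card {d-k+1..d} = card T" using T kd by simp
    show "\<forall>a\<in>{d-k+1..d} - T. \<forall>b\<in>T - {d-k+1..d}. w a \<le> w b"
      using T kd by (auto intro!: mono)
  qed
qed

lemma Wbound:
  fixes w :: "nat \<Rightarrow> real"
  assumes mono: "\<And>i j. 1 \<le> i \<Longrightarrow> i \<le> j \<Longrightarrow> j \<le> d \<Longrightarrow> w j \<le> w i"
    and k1: "1 \<le> k" and kd: "k \<le> d - 1"
  shows "real d * wmin d k w \<le> real k * Wtot d w"
proof -
  define m where "m = d - k"
  have m1: "1 \<le> m" and dmk: "d = m + k" using k1 kd m_def by auto
  define A where "A = (\<Sum>j=1..m. w j)"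
  have split: "{1..d} = {1..m} \<union> {m+1..d}" using dmk by auto
  have W: "Wtot d w = A + wmin d k w"
    unfolding Wtot_def A_def wmin_def split m_def
    by (subst sum.union_disjoint) (auto simp: m_def)
  have "\<forall>j\<in>{1..m}. w (m+1) \<le> w j" using dmk k1 by (auto intro!: mono)
  then have A1: "real m * w (m+1) \<le> A" unfolding A_def
    using sum_bounded_below[of "{1..m}" "w (m+1)" w] by simp
  have "\<forall>j\<in>{d-k+1..d}. w j \<le> w (m+1)" using dmk k1 by (auto intro!: mono)
  then have B1: "wmin d k w \<le> real k * w (m+1)" unfolding wmin_def
    using sum_bounded_above[of "{d-k+1..d}" w "w (m+1)"] dmk by simp
  have "real m * wmin d k w \<le> real m * (real k * w (m+1))"
    using B1 by (intro mult_left_mono) auto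
  also have "\<dots> = real k * (real m * w (m+1))" by simp
  also have "\<dots> \<le> real k * A" using A1 by (intro mult_left_mono) auto
  finally have "real m * wmin d k w \<le> real k * A" .
  then show ?thesis using W dmk by (simp add: algebra_simps)
qed

theorem theorem6p2:
  fixes \<epsilon> :: real and d k :: nat and w :: "nat \<Rightarrow> real"
  assumes "\<epsilon> > 0"
    and "\<And>i j. 1 \<le> i \<Longrightarrow> i \<le> j \<Longrightarrow> j \<le> d \<Longrightarrow> w j \<le> w i"
    and "1 \<le> k" and "k \<le> d - 1"
    and "wmax k w > wmin d k w"
  shows "\<forall>v\<in>scored_votes d w. \<forall>v'\<in>scored_votes d w. \<forall>S\<in>k_subsets d k.
           additive_prob \<epsilon> d k w v S \<le> exp \<epsilon> * additive_prob \<epsilon> d k w v' S"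
proof (intro ballI)
  fix v v' S
  assume v: "v \<in> scored_votes d w" and v': "v' \<in> scored_votes d w" and S: "S \<in> k_subsets d k"
  have kd: "k \<le> d" and d0: "0 < d" using assms by auto
  have SS: "S \<subseteq> {1..d}" "card S = k" using S unfolding k_subsets_def by auto
  define D where "D = wmax k w - wmin d k w"
  have D: "D > 0" using assms D_def by simp
  define e where "e = exp \<epsilon>"
  have e1: "e > 1" using assms e_def by simp
  have xb: "\<And>u. u \<in> scored_votes d w \<Longrightarrow> wmin d k w \<le> (\<Sum>j\<in>S. u j) \<and> (\<Sum>j\<in>S. u j) \<le> wmax k w"
  proof -
    fix u assume "u \<in> scored_votes d w"
    then obtain \<sigma> where \<sigma>: "\<sigma> permutes {1..d}" "\<forall>j\<in>{1..d}. u j = w (\<sigma> j)"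
      unfolding scored_votes_def by auto
    have "(\<Sum>j\<in>S. u j) = (\<Sum>j\<in>S. w (\<sigma> j))" using \<sigma> SS by (intro sum.cong) auto
    also have "\<dots> = sum w (\<sigma> ` S)"
      using \<sigma>(1) by (simp add: sum.reindex permutes_inj_on)
    finally have eq: "(\<Sum>j\<in>S. u j) = sum w (\<sigma> ` S)" .
    have "\<sigma> ` S \<subseteq> {1..d}" using \<sigma>(1) SS permutes_image by blast
    moreover have "card (\<sigma> ` S) = k" using SS \<sigma>(1) by (simp add: card_image permutes_inj_on)
    ultimately show "wmin d k w \<le> (\<Sum>j\<in>S. u j) \<and> (\<Sum>j\<in>S. u j) \<le> wmax k w"
      using bounds[OF assms(2) _ _ kd] eq by auto
  qed
  define x where "x = ((\<Sum>j\<in>S. v j) - wmin d k w) / D"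
  define x' where "x' = ((\<Sum>j\<in>S. v' j) - wmin d k w) / D"
  have x: "0 \<le> x" "x \<le> 1" using xb[OF v] D unfolding x_def D_def by auto
  have x': "0 \<le> x'" "x' \<le> 1" using xb[OF v'] D unfolding x'_def D_def by auto
  have Wb: "real d * wmin d k w \<le> real k * Wtot d w" using Wbound[OF assms(2-4)] .
  have "wmin d k w \<le> real k / real d * Wtot d w"
    using Wb d0 by (simp add: field_simps)
  then have "(e - 1) * wmin d k w \<le> (e - 1) * (real k / real d * Wtot d w)"
    using e1 by (intro mult_left_mono) auto
  then have N: "real k / real d * (e - 1) * Wtot d w - e * wmin d k w + wmax k w > 0"
    using assms(5) by (simp add: algebra_simps)
  have ch: "real (d choose k) > 0" using kd by simp
  have P: "Phi \<epsilon> d k w > 0" unfolding Phi_def using N ch D D_def e_def by simp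
  have eqv: "additive_prob \<epsilon> d k w v S = (x * (e - 1) + 1) / Phi \<epsilon> d k w"
    unfolding additive_prob_def x_def D_def e_def by (simp add: add_divide_distrib)
  have eqv': "additive_prob \<epsilon> d k w v' S = (x' * (e - 1) + 1) / Phi \<epsilon> d k w"
    unfolding additive_prob_def x'_def D_def e_def by (simp add: add_divide_distrib)
  have "x * (e - 1) + 1 \<le> e" using x e1 by (smt (verit) mult_left_le_one_le)
  also have "e \<le> e * (x' * (e - 1) + 1)" using x' e1 by simp
  finally have "(x * (e - 1) + 1) / Phi \<epsilon> d k w \<le> e * (x' * (e - 1) + 1) / Phi \<epsilon> d k w"
    using P by (simp add: divide_right_mono)
  then show "additive_prob \<epsilon> d k w v S \<le> exp \<epsilon> * additive_prob \<epsilon> d k w v' S"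
    using eqv eqv' e_def by simp
qed

end
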